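(* Let $I=(G,T,k)$ be a Node Multiway Cut instance with $s=|T|\ge 2$ satisfying: (R1) no two terminals are adjacent and $p(I)\ge 0$; (R2) no vertex of $V\setminus T$ is adjacent to two distinct terminals; (R3) for every terminal $t$ and every neighbour $w\in V\setminus T$ of $t$, the optimum of the LP-relaxation of $I$ with the additional constraint $d_w=0$ is strictly larger than $LP(I)$. If $q(I)\ge \frac{s-2}{s-1}k$ or $q(I)\le 2p(I)$, then $I$ is a YES-instance.
   Context: A Node Multiway Cut instance $I=(G,T,k)$ consists of a simple undirected graph $G=(V,E)$, a set $T\subseteq V$ of terminals and an integer $k$; it is a YES-instance iff there is a set $X\subseteq V\setminus T$ with $|X|\le k$ such that every path in $G$ between two distinct terminals contains a vertex of $X$. Let $\mathcal P(I)$ be the set of all simple paths in $G$ connecting two distinct terminals. The LP-relaxation of $I$ is: minimize $\sum_{v\in V\setminus T} d_v$ subject to $\sum_{v\in V(P)\setminus T} d_v\ge 1$ for every $P\in\mathcal P(I)$ and $d_v\ge 0$ for all $v\in V\setminus T$. $LP(I)$ denotes its optimum value and $p(I)=k-LP(I)$. For $t\in T$, a separating cut of $t$ is a set $S\subseteq V\setminus T$ such that $t$ is disconnected from $T\setminus\{t\}$ in $G-S$; $m(I,t)$ is the minimum size of a separating cut of $t$, and $q(I)=k-\max_{t\in T}m(I,t)$. *)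

theory Defs
  imports Complex_Main "HOL-Library.Extended_Real"
begin

definition simple_graph :: "'a set \<Rightarrow> 'a set set \<Rightarrow> bool" where
  "simple_graph V E \<longleftrightarrow> finite V \<and> (\<forall>e\<in>E. card e = 2 \<and> e \<subseteq> V)"

definition adj :: "'a set set \<Rightarrow> 'a \<Rightarrow> 'a \<Rightarrow> bool" where
  "adj E u v \<longleftrightarrow> {u, v} \<in> E"

definition is_path :: "'a set \<Rightarrow> 'a set set \<Rightarrow> 'a list \<Rightarrow> bool" where
  "is_path V E P \<longleftrightarrow> P \<noteq> [] \<and> distinct P \<and> set P \<subseteq> V \<and>
     (\<forall>i. Suc i < length P \<longrightarrow> adj E (P ! i) (P ! Suc i))"

definition term_paths :: "'a set \<Rightarrow> 'a set set \<Rightarrow> 'a set \<Rightarrow> 'a list set" where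
  "term_paths V E T = {P. is_path V E P \<and> hd P \<in> T \<and> last P \<in> T \<and> hd P \<noteq> last P}"

definition yes_instance :: "'a set \<Rightarrow> 'a set set \<Rightarrow> 'a set \<Rightarrow> int \<Rightarrow> bool" where
  "yes_instance V E T k \<longleftrightarrow>
     (\<exists>X. X \<subseteq> V - T \<and> int (card X) \<le> k \<and> (\<forall>P\<in>term_paths V E T. set P \<inter> X \<noteq> {}))"

text \<open>Feasible solutions of the LP relaxation (values of d outside V - T are irrelevant).\<close>
definition lp_feasible :: "'a set \<Rightarrow> 'a set set \<Rightarrow> 'a set \<Rightarrow> ('a \<Rightarrow> real) \<Rightarrow> bool" where
  "lp_feasible V E T d \<longleftrightarrow> (\<forall>v\<in>V - T. d v \<ge> 0) \<and>
     (\<forall>P\<in>term_paths V E T. (\<Sum>v\<in>set P - T. d v) \<ge> 1)"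

text \<open>LP optimum (as extended real; an infeasible LP has optimum +\<infinity>).\<close>
definition LP :: "'a set \<Rightarrow> 'a set set \<Rightarrow> 'a set \<Rightarrow> ereal" where
  "LP V E T = (INF d\<in>{d. lp_feasible V E T d}. ereal (\<Sum>v\<in>V - T. d v))"

definition LP_fix0 :: "'a set \<Rightarrow> 'a set set \<Rightarrow> 'a set \<Rightarrow> 'a \<Rightarrow> ereal" where
  "LP_fix0 V E T w = (INF d\<in>{d. lp_feasible V E T d \<and> d w = 0}. ereal (\<Sum>v\<in>V - T. d v))"

definition p_param :: "'a set \<Rightarrow> 'a set set \<Rightarrow> 'a set \<Rightarrow> int \<Rightarrow> ereal" where
  "p_param V E T k = ereal (real_of_int k) - LP V E T"

definition separating_cut :: "'a set \<Rightarrow> 'a set set \<Rightarrow> 'a set \<Rightarrow> 'a \<Rightarrow> 'a set \<Rightarrow> bool" where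
  "separating_cut V E T t S \<longleftrightarrow> S \<subseteq> V - T \<and>
     \<not> (\<exists>P. is_path V E P \<and> hd P = t \<and> last P \<in> T - {t} \<and> set P \<inter> S = {})"

definition m_param :: "'a set \<Rightarrow> 'a set set \<Rightarrow> 'a set \<Rightarrow> 'a \<Rightarrow> nat" where
  "m_param V E T t = Min (card ` {S. separating_cut V E T t S})"

definition q_param :: "'a set \<Rightarrow> 'a set set \<Rightarrow> 'a set \<Rightarrow> int \<Rightarrow> int" where
  "q_param V E T k = k - int (Max (m_param V E T ` T))"

end

theory Submission
  imports Defs "HOL-Analysis.Analysis"
begin


lemma adj_sym: "adj E u v = adj E v u"
  by (simp add: adj_def insert_commute)

lemma adj_in_V: "simple_graph V E \<Longrightarrow> adj E u v \<Longrightarrow> u \<in> V \<and> v \<in> V \<and> u \<noteq> v"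
proof -
  assume g: "simple_graph V E" and a: "adj E u v"
  then have "card {u, v} = 2" "{u, v} \<subseteq> V" unfolding simple_graph_def adj_def by auto
  then show ?thesis by (cases "u = v") auto
qed

fun walk :: "'a set set \<Rightarrow> 'a list \<Rightarrow> bool" where
  "walk E [] = False"
| "walk E [x] = True"
| "walk E (x # y # xs) = (adj E x y \<and> walk E (y # xs))"

lemma walk_idx: "walk E P \<longleftrightarrow> P \<noteq> [] \<and> (\<forall>i. Suc i < length P \<longrightarrow> adj E (P ! i) (P ! Suc i))"
proof (induction E P rule: walk.induct)
  case (3 E x y xs)
  show ?case
  proof
    assume "walk E (x # y # xs)"
    then show "x # y # xs \<noteq> [] \<and> (\<forall>i. Suc i < length (x # y # xs) \<longrightarrow> adj E ((x # y # xs) ! i) ((x # y # xs) ! Suc i))"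
      using 3 by (auto simp: less_Suc_eq_0_disj nth_Cons split: nat.splits)
  next
    assume h: "x # y # xs \<noteq> [] \<and> (\<forall>i. Suc i < length (x # y # xs) \<longrightarrow> adj E ((x # y # xs) ! i) ((x # y # xs) ! Suc i))"
    then have "adj E x y" by (metis Suc_less_eq length_Cons nth_Cons_0 nth_Cons_Suc zero_less_Suc)
    moreover have "\<forall>i. Suc i < length (y # xs) \<longrightarrow> adj E ((y # xs) ! i) ((y # xs) ! Suc i)"
    proof (intro allI impI)
      fix i assume "Suc i < length (y # xs)"
      with h have "adj E ((x # y # xs) ! Suc i) ((x # y # xs) ! Suc (Suc i))" by auto
      then show "adj E ((y # xs) ! i) ((y # xs) ! Suc i)" by simp
    qed
    ultimately show "walk E (x # y # xs)" using 3 by simp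
  qed
qed auto

lemma is_path_walk: "is_path V E P \<longleftrightarrow> distinct P \<and> set P \<subseteq> V \<and> walk E P"
  unfolding is_path_def walk_idx by auto

lemma walk_append: "walk E (xs @ y # ys) \<longleftrightarrow> walk E (xs @ [y]) \<and> walk E (y # ys)"
proof (induction xs)
  case Nil then show ?case by (cases ys) auto
next
  case (Cons a xs) then show ?case by (cases xs) auto
qed

lemma walk_snoc: "walk E Q \<Longrightarrow> adj E (last Q) x \<Longrightarrow> walk E (Q @ [x])"
proof -
  assume w: "walk E Q" and a: "adj E (last Q) x"
  have Q: "Q = butlast Q @ [last Q]" using w by (metis append_butlast_last_id walk.simps(1))
  have "walk E (butlast Q @ last Q # [x])"
    using walk_append[of E "butlast Q" "last Q" "[x]"] w a Q by simp
  then show ?thesis using Q by (metis append_Cons append_Nil append_assoc)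
qed

lemma walk_rev: "walk E P \<Longrightarrow> walk E (rev P)"
proof (induction E P rule: walk.induct)
  case (3 E x y xs)
  then have "walk E (rev xs @ [y])" "adj E y x" by (auto simp: adj_sym)
  then have "walk E (rev xs @ y # [x])" using walk_append[of E "rev xs" y "[x]"] by simp
  then show ?case by simp
qed auto

lemma walk_path:
  assumes "walk E P" "set P \<subseteq> V"
  shows "\<exists>Q. is_path V E Q \<and> hd Q = hd P \<and> last Q = last P \<and> set Q \<subseteq> set P"
  using assms
proof (induction "length P" arbitrary: P rule: less_induct)
  case less
  show ?case
  proof (cases "distinct P")
    case True then show ?thesis using less.prems by (auto simp: is_path_walk)
  next
    case False
    then obtain xs ys zs y where P: "P = xs @ [y] @ ys @ [y] @ zs" using not_distinct_decomp by blast
    let ?P = "xs @ [y] @ zs"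
    have w1: "walk E (xs @ [y])" using less.prems(1) walk_append[of E xs y "ys @ [y] @ zs"] P by simp
    have w2: "walk E (y # zs)" using less.prems(1) walk_append[of E "xs @ [y] @ ys" y zs] P by simp
    have w: "walk E ?P" using w1 w2 walk_append[of E xs y zs] by simp
    have "length ?P < length P" using P by simp
    moreover have "set ?P \<subseteq> V" using less.prems P by auto
    ultimately obtain Q where Q: "is_path V E Q" "hd Q = hd ?P" "last Q = last ?P" "set Q \<subseteq> set ?P"
      using less.hyps w by blast
    have "hd ?P = hd P" using P by (cases xs) auto
    moreover have "last ?P = last P" using P by (cases zs) auto
    moreover have "set ?P \<subseteq> set P" using P by auto
    ultimately show ?thesis using Q by auto
  qed
qed



lemma term_paths_rev: "P \<in> term_paths V E T \<Longrightarrow> rev P \<in> term_paths V E T"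
  unfolding term_paths_def is_path_walk
  by (auto simp: walk_rev hd_rev last_rev)

definition wt :: "('a \<Rightarrow> real) \<Rightarrow> 'a set \<Rightarrow> 'a list \<Rightarrow> real" where
  "wt d X Q = (\<Sum>u\<in>set Q - X. d u)"

locale mwc =
  fixes V :: "'a set" and E :: "'a set set" and T :: "'a set" and d :: "'a \<Rightarrow> real"
  assumes graph: "simple_graph V E" and TV: "T \<subseteq> V"
    and R1a: "\<forall>t\<in>T. \<forall>t'\<in>T. \<not> adj E t t'"
    and feas: "lp_feasible V E T d"
begin

lemma finV: "finite V" using graph by (simp add: simple_graph_def)

lemma dnn: "u \<in> V - T \<Longrightarrow> 0 \<le> d u" using feas by (simp add: lp_feasible_def)

lemma wt_mono:
  assumes "set Q - X \<subseteq> set R - Y" "set R \<subseteq> V" "T \<subseteq> Y"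
  shows "wt d X Q \<le> wt d Y R"
  unfolding wt_def
proof (rule sum_mono2)
  show "finite (set R - Y)" by simp
  show "set Q - X \<subseteq> set R - Y" by (rule assms(1))
  show "\<And>b. b \<in> set R - Y - (set Q - X) \<Longrightarrow> 0 \<le> d b"
    using assms(2,3) dnn by blast
qed

lemma wt_nonneg: "set Q \<subseteq> V \<Longrightarrow> T \<subseteq> X \<Longrightarrow> 0 \<le> wt d X Q"
  unfolding wt_def by (rule sum_nonneg) (use dnn in blast)

lemma walk_term:
  assumes "walk E W" "set W \<subseteq> V" "hd W \<in> T" "last W \<in> T" "hd W \<noteq> last W"
  shows "1 \<le> wt d T W"
proof -
  obtain R where R: "is_path V E R" "hd R = hd W" "last R = last W" "set R \<subseteq> set W"
    using walk_path[OF assms(1,2)] by blast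
  then have "R \<in> term_paths V E T" using assms by (simp add: term_paths_def)
  then have "1 \<le> wt d T R" using feas by (simp add: lp_feasible_def wt_def)
  also have "\<dots> \<le> wt d T W" using R assms by (intro wt_mono) auto
  finally show ?thesis .
qed

lemma wt_split:
  assumes "u \<in> set Q" "u \<notin> T"
  shows "wt d T Q = wt d (insert u T) Q + d u"
proof -
  have e: "set Q - T = insert u (set Q - insert u T)" using assms by blast
  have "sum d (set Q - T) = sum d (insert u (set Q - insert u T))" using e by (rule arg_cong)
  also have "\<dots> = d u + sum d (set Q - insert u T)" by (rule sum.insert) auto
  finally show ?thesis unfolding wt_def by linarith
qed

definition PS :: "'a \<Rightarrow> 'a \<Rightarrow> 'a list set" where
  "PS t v = {Q. is_path V E Q \<and> hd Q = t \<and> last Q = v}"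

definition dst :: "'a \<Rightarrow> 'a \<Rightarrow> real" where
  "dst t v = Min (insert 1 (wt d (insert v T) ` PS t v))"

lemma PS_finite: "finite (PS t v)"
proof (rule finite_subset)
  show "PS t v \<subseteq> {xs. set xs \<subseteq> V \<and> length xs \<le> card V}"
  proof
    fix Q assume "Q \<in> PS t v"
    then have dq: "distinct Q" and sq: "set Q \<subseteq> V" unfolding PS_def is_path_def by auto
    have "length Q = card (set Q)" using distinct_card[OF dq] by simp
    also have "\<dots> \<le> card V" by (rule card_mono[OF finV sq])
    finally show "Q \<in> {xs. set xs \<subseteq> V \<and> length xs \<le> card V}" using sq by simp
  qed
  show "finite {xs. set xs \<subseteq> V \<and> length xs \<le> card V}" by (rule finite_lists_length_le[OF finV])
qed

lemma dst_le1: "dst t v \<le> 1"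
  unfolding dst_def using PS_finite by simp

lemma dst_le_path: "Q \<in> PS t v \<Longrightarrow> dst t v \<le> wt d (insert v T) Q"
  unfolding dst_def using PS_finite by simp

lemma dst_nonneg: "0 \<le> dst t v"
  unfolding dst_def using PS_finite
proof (subst Min_ge_iff)
  show "\<forall>a\<in>insert 1 (wt d (insert v T) ` PS t v). 0 \<le> a"
  proof
    fix a assume "a \<in> insert 1 (wt d (insert v T) ` PS t v)"
    then consider "a = 1" | Q where "Q \<in> PS t v" "a = wt d (insert v T) Q" by blast
    then show "0 \<le> a"
    proof cases
      case 2
      then have "set Q \<subseteq> V" unfolding PS_def is_path_def by auto
      then show ?thesis using 2 wt_nonneg[of Q "insert v T"] by auto
    qed simp
  qed
qed auto

lemma dst_real: "dst t v < 1 \<Longrightarrow> \<exists>Q\<in>PS t v. wt d (insert v T) Q = dst t v"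
proof -
  assume a: "dst t v < 1"
  have "dst t v \<in> insert 1 (wt d (insert v T) ` PS t v)"
    unfolding dst_def using PS_finite by (intro Min_in) auto
  with a show ?thesis by auto
qed

lemma PS_walk: "Q \<in> PS t v \<Longrightarrow> walk E Q \<and> set Q \<subseteq> V \<and> Q \<noteq> [] \<and> hd Q = t \<and> last Q = v \<and> distinct Q"
  unfolding PS_def is_path_walk by auto

lemma lemL:
  assumes u: "u \<in> V - T" and t: "t \<in> T" and x: "x \<in> T" and a: "adj E u x"
    and lt: "dst t u + d u < 1"
  shows "x = t"
proof (rule ccontr)
  assume xt: "x \<noteq> t"
  have "dst t u < 1" using lt dnn[OF u] by linarith
  then obtain Q where Q: "Q \<in> PS t u" "wt d (insert u T) Q = dst t u" using dst_real by blast
  note Qw = PS_walk[OF Q(1)]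
  let ?W = "Q @ [x]"
  have w: "walk E ?W" using Qw a by (intro walk_snoc) auto
  have "1 \<le> wt d T ?W"
    using w Qw x xt TV t by (intro walk_term) auto
  also have "wt d T ?W = wt d (insert u T) Q + d u"
  proof -
    have "u \<in> set Q" using Qw by (metis last_in_set)
    then have "set ?W - T = insert u (set Q - insert u T)" using x u by auto
    then show ?thesis unfolding wt_def by (simp add: add.commute)
  qed
  finally show False using Q lt by simp
qed

lemma lemM:
  assumes u: "u \<in> V - T" and v: "v \<in> V - T" and a: "adj E u v"
  shows "dst t v \<le> dst t u + d u"
proof (cases "dst t u < 1")
  case False
  then show ?thesis using dst_le1[of t v] dnn[OF u] by linarith
next
  case True
  then obtain Q where Q: "Q \<in> PS t u" "wt d (insert u T) Q = dst t u" using dst_real by blast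
  note Qw = PS_walk[OF Q(1)]
  let ?W = "Q @ [v]"
  have w: "walk E ?W" using Qw a by (intro walk_snoc) auto
  have sW: "set ?W \<subseteq> V" using Qw v by simp
  from walk_path[OF w sW] obtain R where
    R: "is_path V E R" "hd R = hd ?W" "last R = last ?W" "set R \<subseteq> set ?W" by blast
  have RP: "R \<in> PS t v" using R Qw by (simp add: PS_def)
  have "dst t v \<le> wt d (insert v T) R" by (rule dst_le_path[OF RP])
  also have "\<dots> \<le> wt d T Q"
  proof (rule wt_mono)
    show "set R - insert v T \<subseteq> set Q - T" using R(4) by auto
  qed (use Qw in auto)
  also have "wt d T Q = wt d (insert u T) Q + d u"
    using Qw u by (intro wt_split) auto
  finally show ?thesis using Q by simp
qed

lemma lemN:
  assumes t: "t \<in> T" and v: "v \<in> V - T" and a: "adj E t v"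
  shows "dst t v \<le> 0"
proof -
  have "[t, v] \<in> PS t v" using t v a TV by (auto simp: PS_def is_path_walk)
  then have "dst t v \<le> wt d (insert v T) [t, v]" by (rule dst_le_path)
  also have "\<dots> = 0" using t unfolding wt_def by simp
  finally show ?thesis .
qed

lemma lemPair:
  assumes s: "s \<in> T" and s': "s' \<in> T" and ss: "s \<noteq> s'" and v: "v \<in> V - T"
  shows "1 \<le> dst s v + dst s' v + d v"
proof (cases "dst s v < 1 \<and> dst s' v < 1")
  case False
  then show ?thesis using dst_nonneg[of s v] dst_nonneg[of s' v] dnn[OF v] by auto
next
  case True
  then obtain Q1 Q2 where Q1: "Q1 \<in> PS s v" "wt d (insert v T) Q1 = dst s v"
    and Q2: "Q2 \<in> PS s' v" "wt d (insert v T) Q2 = dst s' v" using dst_real by meson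
  note Q1w = PS_walk[OF Q1(1)] and Q2w = PS_walk[OF Q2(1)]
  let ?W = "butlast Q1 @ rev Q2"
  have e1: "butlast Q1 @ [v] = Q1" using Q1w by (metis append_butlast_last_id)
  have e2: "v # tl (rev Q2) = rev Q2" using Q2w
    by (cases "rev Q2") (auto simp: hd_rev[symmetric])
  have "walk E (butlast Q1 @ v # tl (rev Q2))"
  proof -
    have "walk E (butlast Q1 @ [v])" using e1 Q1w by simp
    moreover have "walk E (v # tl (rev Q2))" using e2 Q2w walk_rev[of E Q2] by simp
    ultimately show ?thesis using walk_append[of E "butlast Q1" v "tl (rev Q2)"] by simp
  qed
  then have w: "walk E ?W" using e2 by simp
  have bne: "butlast Q1 \<noteq> []"
  proof
    assume "butlast Q1 = []"
    then have "Q1 = [v]" using e1 by simp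
    then show False using Q1w s v by auto
  qed
  have "hd (butlast Q1) = hd Q1" using e1 bne by (metis hd_append2)
  then have hW: "hd ?W = s" using bne Q1w by simp
  have lW: "last ?W = s'" using Q2w by (simp add: last_rev)
  have sW: "set ?W \<subseteq> set Q1 \<union> set Q2"
  proof -
    have "set (butlast Q1) \<subseteq> set Q1" by (meson in_set_butlastD subsetI)
    then show ?thesis by auto
  qed
  have "1 \<le> wt d T ?W" using w hW lW sW Q1w Q2w s s' ss by (intro walk_term) auto
  also have "\<dots> \<le> (\<Sum>u\<in>insert v ((set Q1 - insert v T) \<union> (set Q2 - insert v T)). d u)"
    unfolding wt_def
  proof (rule sum_mono2)
    show "set ?W - T \<subseteq> insert v ((set Q1 - insert v T) \<union> (set Q2 - insert v T))" using sW by blast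
    show "\<And>b. b \<in> insert v ((set Q1 - insert v T) \<union> (set Q2 - insert v T)) - (set ?W - T) \<Longrightarrow> 0 \<le> d b"
      using Q1w Q2w v dnn by blast
  qed auto
  also have "\<dots> \<le> d v + ((\<Sum>u\<in>set Q1 - insert v T. d u) + (\<Sum>u\<in>set Q2 - insert v T. d u))"
  proof -
    let ?A = "set Q1 - insert v T" and ?B = "set Q2 - insert v T"
    have h1: "(\<Sum>u\<in>insert v (?A \<union> ?B). d u) = d v + (\<Sum>u\<in>?A \<union> ?B. d u)" by simp
    have h2: "(\<Sum>u\<in>?A \<union> ?B. d u) = (\<Sum>u\<in>?A. d u) + (\<Sum>u\<in>?B. d u) - (\<Sum>u\<in>?A \<inter> ?B. d u)"
      by (rule sum_Un) auto
    have h3: "(\<Sum>u\<in>?A \<inter> ?B. d u) \<ge> 0"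
      using Q1w by (intro sum_nonneg) (auto intro: dnn)
    show ?thesis using h1 h2 h3 by linarith
  qed
  finally show ?thesis using Q1 Q2 unfolding wt_def by linarith
qed

lemma lemCross:
  assumes P: "P \<in> term_paths V E T" and th0: "0 \<le> \<theta>" and th1: "\<theta> < 1/2"
  shows "\<exists>v\<in>set P - T. dst (hd P) v \<le> \<theta> \<and> \<theta> < dst (hd P) v + d v"
proof -
  let ?t = "hd P" let ?n = "length P"
  have ip: "is_path V E P" and ht: "hd P \<in> T" and lt: "last P \<in> T" and hl: "hd P \<noteq> last P"
    using P by (auto simp: term_paths_def)
  have ne: "P \<noteq> []" and dP: "distinct P" and sP: "set P \<subseteq> V"
    and adjP: "\<And>i. Suc i < ?n \<Longrightarrow> adj E (P!i) (P!Suc i)" using ip by (auto simp: is_path_def)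
  have P0: "P!0 = ?t" by (simp add: hd_conv_nth ne)
  have Pl: "P!(?n - 1) = last P" by (simp add: last_conv_nth ne)
  have n2: "2 \<le> ?n"
  proof (rule ccontr)
    assume "\<not> 2 \<le> ?n"
    then have "?n - 1 = 0" by simp
    then show False using P0 Pl hl by simp
  qed
  have inV: "\<And>i. i < ?n \<Longrightarrow> P!i \<in> V" using sP nth_mem by blast
  have ex1: "\<exists>j. Suc j < ?n \<and> P!j \<notin> T \<and> P!Suc j \<in> T"
  proof -
    let ?J = "{i. i < ?n \<and> P!i \<notin> T}"
    have Jne: "?J \<noteq> {}"
    proof
      assume "?J = {}"
      then have a: "\<forall>x<?n. P!x \<in> T" by auto
      have "0 < ?n" "1 < ?n" using n2 by auto
      then have "P!0 \<in> T" "P!1 \<in> T" using a by blast+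
      moreover have "adj E (P!0) (P!1)" using adjP[of 0] n2 by simp
      ultimately show False using R1a by blast
    qed
    have fJ: "finite ?J" by simp
    have jJ: "Max ?J \<in> ?J" by (rule Max_in[OF fJ Jne])
    have "Max ?J \<noteq> ?n - 1" using jJ Pl lt by auto
    then have sj: "Suc (Max ?J) < ?n" using jJ by auto
    have "Suc (Max ?J) \<notin> ?J"
    proof
      assume "Suc (Max ?J) \<in> ?J"
      then have "Suc (Max ?J) \<le> Max ?J" by (rule Max_ge[OF fJ])
      then show False by simp
    qed
    then have "P ! Suc (Max ?J) \<in> T" using sj by blast
    then show ?thesis using sj jJ by blast
  qed
  then obtain j where j: "Suc j < ?n" "P!j \<notin> T" "P!Suc j \<in> T" by blast
  have jgood: "\<theta> < dst ?t (P!j) + d (P!j)"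
  proof (rule ccontr)
    assume "\<not> ?thesis"
    then have "dst ?t (P!j) + d (P!j) < 1" using th1 by linarith
    then have "P!Suc j = ?t" using lemL[of "P!j" ?t "P!Suc j"] j inV adjP ht by auto
    then have "P!Suc j = P!0" using P0 by simp
    then have "Suc j = 0" using nth_eq_iff_index_eq[OF dP, of "Suc j" 0] j(1) by linarith
    then show False by simp
  qed
  define Pr where "Pr k \<longleftrightarrow> k < ?n \<and> P!k \<notin> T \<and> \<theta> < dst ?t (P!k) + d (P!k)" for k
  have "Pr j" using j jgood by (simp add: Pr_def)
  define i where "i = (LEAST k. Pr k)"
  have Pi: "Pr i" using LeastI[of Pr j] \<open>Pr j\<close> i_def by simp
  have mini: "\<And>k. k < i \<Longrightarrow> \<not> Pr k" using not_less_Least i_def by blast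
  have Pi1: "i < ?n" "P!i \<notin> T" "\<theta> < dst ?t (P!i) + d (P!i)" using Pi by (auto simp: Pr_def)
  have "i \<noteq> 0"
  proof
    assume "i = 0"
    then show False using Pi1(2) P0 ht by simp
  qed
  then obtain i' where ii: "i = Suc i'" by (cases i) auto
  have adj1: "adj E (P!i') (P!i)" using adjP[of i'] Pi1 ii by simp
  have viT: "P!i \<in> V - T" using Pi1 inV by auto
  have "dst ?t (P!i) \<le> \<theta>"
  proof (cases "P!i' \<in> T")
    case False
    then have "\<not> Pr i'" using mini ii by simp
    then have "dst ?t (P!i') + d (P!i') \<le> \<theta>" using False Pi1 ii by (auto simp: Pr_def)
    moreover have "dst ?t (P!i) \<le> dst ?t (P!i') + d (P!i')"
      using lemM[of "P!i'" "P!i" ?t] False viT adj1 inV Pi1 ii by simp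
    ultimately show ?thesis by linarith
  next
    case True
    show ?thesis
    proof (cases i')
      case 0
      then have "adj E ?t (P!i)" using adj1 P0 by simp
      then have "dst ?t (P!i) \<le> 0" using lemN[of ?t "P!i"] viT ht by simp
      then show ?thesis using th0 by linarith
    next
      case (Suc i'')
      have adj2: "adj E (P!i'') (P!i')" using adjP[of i''] Pi1 ii Suc by simp
      show ?thesis
      proof (cases "P!i'' \<in> T")
        case True
        then show ?thesis using R1a adj2 \<open>P!i' \<in> T\<close> by blast
      next
        case False
        then have "\<not> Pr i''" using mini ii Suc by simp
        then have "dst ?t (P!i'') + d (P!i'') \<le> \<theta>" using False Pi1 ii Suc by (auto simp: Pr_def)
        then have "dst ?t (P!i'') + d (P!i'') < 1" using th1 by linarith
        then have "P!i' = ?t"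
          using lemL[of "P!i''" ?t "P!i'"] False \<open>P!i' \<in> T\<close> adj2 inV Pi1 ii Suc ht by simp
        then have "P!i' = P!0" using P0 by simp
        then have "i' = 0" using nth_eq_iff_index_eq[OF dP, of i' 0] Pi1 ii by linarith
        then show ?thesis using Suc by simp
      qed
    qed
  qed
  moreover have "P!i \<in> set P - T" using Pi1 by auto
  ultimately show ?thesis using Pi1 by blast
qed

end


lemma Ico_fm: "{a..<b::real} \<in> fmeasurable lborel"
proof (cases "a \<le> b")
  case True then show ?thesis by (intro fmeasurableI) auto
next
  case False then have "{a..<b} = {}" by auto
  then show ?thesis by (simp add: fmeasurableI)
qed

lemma meas_Ico: "a \<le> b \<Longrightarrow> measure lborel {a..<b::real} = b - a"
  by (simp add: measure_def)

lemma meas_sub_Ico: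
  assumes "A \<subseteq> {a..<b::real}" "A \<in> sets lborel"
  shows "measure lborel A \<le> max 0 (b - a)"
proof (cases "a \<le> b")
  case True
  have "measure lborel A \<le> measure lborel {a..<b}"
    by (rule measure_mono_fmeasurable[OF assms(1,2) Ico_fm])
  then show ?thesis using meas_Ico[OF True] by simp
next
  case False then have "A = {}" using assms by auto
  then show ?thesis by simp
qed

lemma fin_em: "A \<subseteq> {a..<b::real} \<Longrightarrow> A \<in> sets lborel \<Longrightarrow> emeasure lborel A < \<infinity>"
proof -
  assume a: "A \<subseteq> {a..<b::real}" "A \<in> sets lborel"
  have "emeasure lborel A \<le> emeasure lborel {a..<b}" by (rule emeasure_mono[OF a(1)]) simp
  moreover have "emeasure lborel {a..<b} < \<infinity>" using Ico_fm[of a b] by (simp add: fmeasurable_def)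
  ultimately show ?thesis by (meson le_less_trans)
qed

lemma avg:
  fixes A1 A2 :: "'v \<Rightarrow> real set"
  assumes F: "finite F"
    and ms: "\<And>v. v \<in> F \<Longrightarrow> A1 v \<in> sets lborel \<and> A2 v \<in> sets lborel \<and> A1 v \<subseteq> {0..<1/2} \<and> A2 v \<subseteq> {0..<1/2}"
    and C: "(\<Sum>v\<in>F. measure lborel (A1 v) + measure lborel (A2 v)) \<le> C"
  shows "\<exists>\<theta>\<in>{0..<1/2}. (\<Sum>v\<in>F. indicator (A1 v) \<theta> + indicator (A2 v) \<theta>) \<le> 2 * C"
proof (rule ccontr)
  assume nt: "\<not> ?thesis"
  have big: "\<And>\<theta>. \<theta> \<in> {0..<1/2} \<Longrightarrow> 2 * C < (\<Sum>v\<in>F. indicator (A1 v) \<theta> + indicator (A2 v) \<theta>)"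
  proof -
    fix \<theta> assume "\<theta> \<in> {0..<1/2::real}"
    with nt show "2 * C < (\<Sum>v\<in>F. indicator (A1 v) \<theta> + indicator (A2 v) \<theta>)"
      by (meson not_le)
  qed
  define g where "g \<theta> = (\<Sum>v\<in>F. indicator (A1 v) \<theta> + indicator (A2 v) \<theta> :: real)" for \<theta>
  have int1: "\<And>v. v \<in> F \<Longrightarrow> integrable lborel (indicator (A1 v) :: real \<Rightarrow> real)"
    using ms fin_em by (intro integrable_real_indicator) blast+
  have int2: "\<And>v. v \<in> F \<Longrightarrow> integrable lborel (indicator (A2 v) :: real \<Rightarrow> real)"
    using ms fin_em by (intro integrable_real_indicator) blast+
  have ig: "integrable lborel g" unfolding g_def
    using int1 int2 by simp
  have Ig: "integral\<^sup>L lborel g = (\<Sum>v\<in>F. measure lborel (A1 v) + measure lborel (A2 v))"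
  proof -
    have "integral\<^sup>L lborel g = (\<Sum>v\<in>F. integral\<^sup>L lborel (\<lambda>\<theta>. indicator (A1 v) \<theta> + indicator (A2 v) \<theta> :: real))"
      unfolding g_def using int1 int2 by simp
    also have "\<dots> = (\<Sum>v\<in>F. measure lborel (A1 v) + measure lborel (A2 v))"
    proof (rule sum.cong)
      fix v assume v: "v \<in> F"
      show "integral\<^sup>L lborel (\<lambda>\<theta>. indicator (A1 v) \<theta> + indicator (A2 v) \<theta> :: real) = measure lborel (A1 v) + measure lborel (A2 v)"
        using int1[OF v] int2[OF v] by (simp add: integral_add)
    qed simp
    finally show ?thesis .
  qed
  define c :: real where "c = of_int (\<lfloor>2 * C\<rfloor> + 1)"
  have gint: "g \<theta> \<in> \<int>" for \<theta> unfolding g_def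
    by (intro Ints_sum Ints_add) (auto simp: indicator_def)
  have cle: "c \<le> g \<theta>" if "\<theta> \<in> {0..<1/2}" for \<theta>
  proof -
    obtain z where z: "g \<theta> = of_int z" using gint[of \<theta>] by (auto elim: Ints_cases)
    have "2 * C < of_int z" using big[OF that] z g_def by simp
    then have "\<lfloor>2 * C\<rfloor> < z" by (meson floor_less_iff)
    then show ?thesis using z c_def by simp
  qed
  have gnn: "0 \<le> g \<theta>" for \<theta> unfolding g_def by (intro sum_nonneg) auto
  have ic: "integrable lborel (\<lambda>\<theta>. c * indicator {0..<1/2::real} \<theta>)"
    using fin_em[of "{0..<1/2}" 0 "1/2"] by (intro integrable_mult_right integrable_real_indicator) auto
  have "integral\<^sup>L lborel (\<lambda>\<theta>. c * indicator {0..<1/2::real} \<theta>) \<le> integral\<^sup>L lborel g"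
    by (rule integral_mono[OF ic ig]) (auto simp: indicator_def cle gnn)
  moreover have "integral\<^sup>L lborel (\<lambda>\<theta>. c * indicator {0..<1/2::real} \<theta>) = c / 2"
  proof -
    have "integral\<^sup>L lborel (\<lambda>\<theta>. c * indicator {0..<1/2::real} \<theta>) = c * measure lborel {0..<1/2::real}"
      by simp
    moreover have "measure lborel {0..<1/2::real} = 1/2" using meas_Ico[of 0 "1/2"] by simp
    ultimately show ?thesis by simp
  qed
  moreover have "2 * C < c" unfolding c_def by linarith
  ultimately show False using Ig C by linarith
qed



context mwc
begin

lemma finT: "finite T" using finV TV finite_subset by blast

definition Iv :: "'a \<Rightarrow> 'a \<Rightarrow> real set" where
  "Iv s v = {dst s v ..< dst s v + d v}"

definition A1 :: "'a \<Rightarrow> real set" where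
  "A1 v = {0..<1/2} \<inter> (\<Union>s\<in>T. Iv s v)"

definition A2 :: "'a \<Rightarrow> real set" where
  "A2 v = {0..<1/2} \<inter> (\<Union>s\<in>T. \<Union>s'\<in>T - {s}. Iv s v \<inter> Iv s' v)"

definition rd :: "real \<Rightarrow> 'a \<Rightarrow> real" where
  "rd \<theta> v = (indicator (A1 v) \<theta> + indicator (A2 v) \<theta>) / 2"

lemma A1_sets: "A1 v \<in> sets lborel"
  unfolding A1_def Iv_def sets_lborel
  by (intro sets.Int sets.finite_UN finT) auto

lemma A2_sets: "A2 v \<in> sets lborel"
  unfolding A2_def Iv_def sets_lborel
  by (intro sets.Int sets.finite_UN finT finite_Diff) auto

lemma A21: "A2 v \<subseteq> A1 v" unfolding A1_def A2_def by blast

lemma rd_nonneg: "0 \<le> rd \<theta> v" unfolding rd_def by simp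

lemma rd_vals: "rd \<theta> v = 0 \<or> 1/2 \<le> rd \<theta> v"
  using A21[of v] unfolding rd_def indicator_def by auto

lemma rd_feas:
  assumes th: "\<theta> \<in> {0..<1/2}"
  shows "lp_feasible V E T (rd \<theta>)"
  unfolding lp_feasible_def
proof (intro conjI ballI)
  fix v show "0 \<le> rd \<theta> v" by (rule rd_nonneg)
next
  fix P assume P: "P \<in> term_paths V E T"
  have Pr: "rev P \<in> term_paths V E T" by (rule term_paths_rev[OF P])
  have ht: "hd P \<in> T" and lt: "last P \<in> T" and hl: "hd P \<noteq> last P"
    using P by (auto simp: term_paths_def)
  have th0: "0 \<le> \<theta>" and th1: "\<theta> < 1/2" using th by auto
  obtain v1 where v1: "v1 \<in> set P - T" "dst (hd P) v1 \<le> \<theta>" "\<theta> < dst (hd P) v1 + d v1"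
    using lemCross[OF P th0 th1] by blast
  obtain v2 where v2: "v2 \<in> set (rev P) - T" "dst (hd (rev P)) v2 \<le> \<theta>" "\<theta> < dst (hd (rev P)) v2 + d v2"
    using lemCross[OF Pr th0 th1] by blast
  have v2': "v2 \<in> set P - T" "dst (last P) v2 \<le> \<theta>" "\<theta> < dst (last P) v2 + d v2"
    using v2 by (auto simp: hd_rev)
  have i1: "\<theta> \<in> Iv (hd P) v1" using v1 by (simp add: Iv_def)
  have i2: "\<theta> \<in> Iv (last P) v2" using v2' by (simp add: Iv_def)
  have a1: "\<theta> \<in> A1 v1" using i1 ht th unfolding A1_def by blast
  have a2: "\<theta> \<in> A1 v2" using i2 lt th unfolding A1_def by blast
  have fin: "finite (set P - T)" by simp
  show "1 \<le> (\<Sum>v\<in>set P - T. rd \<theta> v)"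
  proof (cases "v1 = v2")
    case True
    then have "\<theta> \<in> A2 v1" using i1 i2 ht lt hl th unfolding A2_def by blast
    then have "rd \<theta> v1 = 1" using a1 unfolding rd_def by simp
    moreover have "rd \<theta> v1 \<le> (\<Sum>v\<in>set P - T. rd \<theta> v)"
      by (rule member_le_sum[OF v1(1) _ fin]) (rule rd_nonneg)
    ultimately show ?thesis by simp
  next
    case False
    have "rd \<theta> v1 + rd \<theta> v2 = (\<Sum>v\<in>{v1, v2}. rd \<theta> v)" using False by simp
    also have "\<dots> \<le> (\<Sum>v\<in>set P - T. rd \<theta> v)"
      by (rule sum_mono2[OF fin]) (use v1 v2' rd_nonneg in auto)
    finally have "rd \<theta> v1 + rd \<theta> v2 \<le> (\<Sum>v\<in>set P - T. rd \<theta> v)" .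
    moreover have "1/2 \<le> rd \<theta> v1" "1/2 \<le> rd \<theta> v2" using a1 a2 unfolding rd_def by (simp_all add: indicator_def)
    ultimately show ?thesis by linarith
  qed
qed

end


context mwc
begin

lemma meas_bound:
  assumes T2: "2 \<le> card T" and v: "v \<in> V - T"
  shows "measure lborel (A1 v) + measure lborel (A2 v) \<le> d v"
proof -
  have fT: "finite T" by (rule finT)
  have Tne: "T \<noteq> {}" using T2 by auto
  have "Min ((\<lambda>s. dst s v) ` T) \<in> (\<lambda>s. dst s v) ` T" using fT Tne by (intro Min_in) auto
  then obtain s1 where s1: "s1 \<in> T" "dst s1 v = Min ((\<lambda>s. dst s v) ` T)" by auto
  have min1: "dst s1 v \<le> dst s v" if "s \<in> T" for s using s1(2) fT that by simp
  have fT': "finite (T - {s1})" using fT by simp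
  have "card (T - {s1}) = card T - 1" using s1(1) fT by simp
  then have T'ne: "T - {s1} \<noteq> {}" using T2 by (metis card.empty diff_is_0_eq not_numeral_le_zero one_le_numeral Suc_1 le_diff_conv not_less_eq_eq)
  have "Min ((\<lambda>s. dst s v) ` (T - {s1})) \<in> (\<lambda>s. dst s v) ` (T - {s1})" using fT' T'ne by (intro Min_in) auto
  then obtain s2 where s2a: "Min ((\<lambda>s. dst s v) ` (T - {s1})) = dst s2 v" "s2 \<in> T - {s1}" by (rule imageE)
  have s2: "s2 \<in> T - {s1}" "dst s2 v = Min ((\<lambda>s. dst s v) ` (T - {s1}))" using s2a by auto
  have min2: "dst s2 v \<le> dst s v" if "s \<in> T - {s1}" for s using s2(2) fT' that by simp
  have pair: "1 \<le> dst s1 v + dst s2 v + d v" using lemPair[of s1 s2 v] s1 s2 v by auto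
  have dv: "0 \<le> d v" using dnn v by blast
  have key: "dst s2 v \<le> \<theta>" if "\<theta> \<in> Iv s v" "\<theta> \<in> Iv s' v" "s \<in> T" "s' \<in> T" "s \<noteq> s'" for \<theta> s s'
  proof (cases "s = s1")
    case True
    then have "s' \<in> T - {s1}" using that by auto
    then show ?thesis using min2 that(2) by (force simp: Iv_def)
  next
    case False
    then have "s \<in> T - {s1}" using that by auto
    then show ?thesis using min2 that(1) by (force simp: Iv_def)
  qed
  show ?thesis
  proof (cases "1/2 \<le> dst s2 v")
    case True
    have "A2 v = {}"
    proof (rule ccontr)
      assume "A2 v \<noteq> {}"
      then obtain \<theta> s s' where "\<theta> \<in> {0..<1/2}" "s \<in> T" "s' \<in> T" "s \<noteq> s'" "\<theta> \<in> Iv s v" "\<theta> \<in> Iv s' v"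
        unfolding A2_def by blast
      then show False using key True by force
    qed
    moreover have "A1 v \<subseteq> Iv s1 v"
    proof
      fix \<theta> assume "\<theta> \<in> A1 v"
      then obtain s where s: "\<theta> \<in> {0..<1/2}" "s \<in> T" "\<theta> \<in> Iv s v" unfolding A1_def by blast
      show "\<theta> \<in> Iv s1 v"
      proof (cases "s = s1")
        case False
        then have "dst s2 v \<le> dst s v" using min2 s by auto
        then show ?thesis using s True by (auto simp: Iv_def)
      qed (use s in simp)
    qed
    then have "measure lborel (A1 v) \<le> max 0 (dst s1 v + d v - dst s1 v)"
      unfolding Iv_def by (rule meas_sub_Ico[OF _ A1_sets])
    ultimately show ?thesis using dv by simp
  next
    case False
    have "s2 \<in> T" using s2a(2) by blast
    then have s12: "dst s1 v \<le> dst s2 v" by (rule min1)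
    have "A1 v \<subseteq> {dst s1 v..<1/2}"
    proof
      fix \<theta> assume "\<theta> \<in> A1 v"
      then obtain s where s: "\<theta> \<in> {0..<1/2}" "s \<in> T" "\<theta> \<in> Iv s v" unfolding A1_def by blast
      then show "\<theta> \<in> {dst s1 v..<1/2}" using min1[of s] by (auto simp: Iv_def)
    qed
    then have m1: "measure lborel (A1 v) \<le> max 0 (1/2 - dst s1 v)" by (rule meas_sub_Ico[OF _ A1_sets])
    have "A2 v \<subseteq> {dst s2 v..<1/2}"
    proof
      fix \<theta> assume "\<theta> \<in> A2 v"
      then obtain s s' where "\<theta> \<in> {0..<1/2}" "s \<in> T" "s' \<in> T" "s \<noteq> s'" "\<theta> \<in> Iv s v" "\<theta> \<in> Iv s' v"
        unfolding A2_def by blast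
      then show "\<theta> \<in> {dst s2 v..<1/2}" using key by auto
    qed
    then have m2: "measure lborel (A2 v) \<le> max 0 (1/2 - dst s2 v)" by (rule meas_sub_Ico[OF _ A2_sets])
    show ?thesis using m1 m2 False s12 pair by auto
  qed
qed

lemma round:
  assumes T2: "2 \<le> card T"
  shows "\<exists>d'. lp_feasible V E T d' \<and> (\<Sum>v\<in>V - T. d' v) \<le> (\<Sum>v\<in>V - T. d v) \<and> (\<forall>v. d' v = 0 \<or> 1/2 \<le> d' v)"
proof -
  have F: "finite (V - T)" using finV by simp
  have "\<exists>\<theta>\<in>{0..<1/2}. (\<Sum>v\<in>V - T. indicator (A1 v) \<theta> + indicator (A2 v) \<theta>) \<le> 2 * (\<Sum>v\<in>V - T. d v)"
  proof (rule avg[OF F])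
    fix v assume "v \<in> V - T"
    show "A1 v \<in> sets lborel \<and> A2 v \<in> sets lborel \<and> A1 v \<subseteq> {0..<1/2} \<and> A2 v \<subseteq> {0..<1/2}"
      using A1_sets A2_sets unfolding A1_def A2_def by auto
  next
    show "(\<Sum>v\<in>V - T. measure lborel (A1 v) + measure lborel (A2 v)) \<le> (\<Sum>v\<in>V - T. d v)"
      by (rule sum_mono) (rule meas_bound[OF T2])
  qed
  then obtain \<theta> where th: "\<theta> \<in> {0..<1/2}"
    and le: "(\<Sum>v\<in>V - T. indicator (A1 v) \<theta> + indicator (A2 v) \<theta>) \<le> 2 * (\<Sum>v\<in>V - T. d v)" by blast
  have "(\<Sum>v\<in>V - T. rd \<theta> v) = (\<Sum>v\<in>V - T. indicator (A1 v) \<theta> + indicator (A2 v) \<theta>) / 2"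
    unfolding rd_def by (simp add: sum_divide_distrib)
  then have "(\<Sum>v\<in>V - T. rd \<theta> v) \<le> (\<Sum>v\<in>V - T. d v)" using le by simp
  then show ?thesis using rd_feas[OF th] rd_vals by blast
qed

end


lemma nbr:
  assumes R1a: "\<forall>t\<in>T. \<forall>t'\<in>T. \<not> adj E t t'" and P: "P \<in> term_paths V E T"
  shows "\<exists>w\<in>set P. w \<in> V - T \<and> adj E (hd P) w"
proof -
  have ip: "is_path V E P" and ht: "hd P \<in> T" and lt: "last P \<in> T" and hl: "hd P \<noteq> last P"
    using P by (auto simp: term_paths_def)
  have ne: "P \<noteq> []" and sP: "set P \<subseteq> V"
    and adjP: "\<And>i. Suc i < length P \<Longrightarrow> adj E (P!i) (P!Suc i)" using ip by (auto simp: is_path_def)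
  have P0: "P!0 = hd P" by (simp add: hd_conv_nth ne)
  have Pl: "P!(length P - 1) = last P" by (simp add: last_conv_nth ne)
  have n2: "1 < length P"
  proof (rule ccontr)
    assume "\<not> 1 < length P"
    then have "length P - 1 = 0" by simp
    then show False using P0 Pl hl by simp
  qed
  have a: "adj E (hd P) (P!1)" using adjP[of 0] n2 P0 by simp
  have m: "P!1 \<in> set P" using n2 by simp
  then have "P!1 \<in> V" using sP by blast
  moreover have "P!1 \<notin> T" using a R1a ht by blast
  ultimately show ?thesis using a m by blast
qed

lemma sep_hits:
  assumes "separating_cut V E T t S" "P \<in> term_paths V E T" "hd P = t"
  shows "set P \<inter> S \<noteq> {}"
  using assms unfolding separating_cut_def term_paths_def by auto

lemma LP_le: "lp_feasible V E T d \<Longrightarrow> LP V E T \<le> ereal (\<Sum>v\<in>V - T. d v)"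
  unfolding LP_def by (rule INF_lower) simp

lemma LP_ge: "(\<And>d. lp_feasible V E T d \<Longrightarrow> c \<le> (\<Sum>v\<in>V - T. d v)) \<Longrightarrow> ereal c \<le> LP V E T"
  unfolding LP_def by (rule INF_greatest) simp


lemma LP_half:
  assumes graph: "simple_graph V E" and TV: "T \<subseteq> V" and s2: "card T \<ge> 2"
    and R1a: "\<forall>t\<in>T. \<forall>t'\<in>T. \<not> adj E t t'"
    and R2: "\<forall>v\<in>V - T. \<forall>t\<in>T. \<forall>t'\<in>T. t \<noteq> t' \<longrightarrow> \<not> (adj E v t \<and> adj E v t')"
    and R3: "\<forall>t\<in>T. \<forall>w\<in>V - T. adj E t w \<longrightarrow> LP_fix0 V E T w > LP V E T"
  shows "\<exists>L. LP V E T = ereal L \<and> real (card {w \<in> V - T. \<exists>t\<in>T. adj E t w}) / 2 \<le> L"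
proof -
  define N where "N = {w \<in> V - T. \<exists>t\<in>T. adj E t w}"
  have finV: "finite V" using graph by (simp add: simple_graph_def)
  have NV: "N \<subseteq> V - T" unfolding N_def by blast
  have finN: "finite N" using NV finV finite_subset by blast
  define dh where "dh v = (if v \<in> N then 1/2 else (0::real))" for v
  have dhf: "lp_feasible V E T dh"
    unfolding lp_feasible_def
  proof (intro conjI ballI)
    fix v show "0 \<le> dh v" by (simp add: dh_def)
  next
    fix P assume P: "P \<in> term_paths V E T"
    obtain w1 where w1: "w1 \<in> set P" "w1 \<in> V - T" "adj E (hd P) w1" using nbr[OF R1a P] by blast
    obtain w2 where w2: "w2 \<in> set (rev P)" "w2 \<in> V - T" "adj E (hd (rev P)) w2"
      using nbr[OF R1a term_paths_rev[OF P]] by blast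
    have ht: "hd P \<in> T" and lt: "last P \<in> T" and hl: "hd P \<noteq> last P" using P by (auto simp: term_paths_def)
    have w2': "w2 \<in> set P" "adj E (last P) w2" using w2 by (auto simp: hd_rev)
    have n1: "w1 \<in> N" using w1 ht unfolding N_def by blast
    have n2: "w2 \<in> N" using w2 w2' lt unfolding N_def by blast
    have ne: "w1 \<noteq> w2"
    proof
      assume "w1 = w2"
      then have "adj E w1 (hd P) \<and> adj E w1 (last P)" using w1 w2' adj_sym by metis
      then show False using R2 w1(2) ht lt hl by blast
    qed
    have fin: "finite (set P - T)" by simp
    have "dh w1 + dh w2 = (\<Sum>v\<in>{w1, w2}. dh v)" using ne by simp
    also have "\<dots> \<le> (\<Sum>v\<in>set P - T. dh v)"
      by (rule sum_mono2[OF fin]) (use w1 w2' w2 dh_def in auto)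
    finally show "1 \<le> (\<Sum>v\<in>set P - T. dh v)" using n1 n2 by (simp add: dh_def)
  qed
  have cdh: "(\<Sum>v\<in>V - T. dh v) = real (card N) / 2"
  proof -
    have "(\<Sum>v\<in>V - T. dh v) = (\<Sum>v\<in>N. dh v)"
      by (rule sum.mono_neutral_right) (use finV NV dh_def in auto)
    also have "\<dots> = (\<Sum>v\<in>N. 1/2)" by (rule sum.cong) (auto simp: dh_def)
    finally show ?thesis by simp
  qed
  have up: "LP V E T \<le> ereal (real (card N) / 2)" using LP_le[OF dhf] cdh by simp
  have lo: "ereal 0 \<le> LP V E T"
  proof (rule LP_ge)
    fix d assume "lp_feasible V E T d"
    then show "0 \<le> (\<Sum>v\<in>V - T. d v)" unfolding lp_feasible_def by (intro sum_nonneg) auto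
  qed
  obtain L where L: "LP V E T = ereal L" using up lo by (cases "LP V E T") auto
  have "real (card N) / 2 \<le> L"
  proof (rule ccontr)
    assume "\<not> ?thesis"
    then have Llt: "L < real (card N) / 2" by simp
    have "\<forall>w\<in>N. \<exists>r. L < r \<and> ereal r < LP_fix0 V E T w"
    proof
      fix w assume w: "w \<in> N"
      then obtain t where "t \<in> T" "adj E t w" "w \<in> V - T" unfolding N_def by blast
      then have "ereal L < LP_fix0 V E T w" using R3 L by metis
      then obtain z where "ereal L < ereal z" "ereal z < LP_fix0 V E T w" using ereal_dense2 by blast
      then show "\<exists>r. L < r \<and> ereal r < LP_fix0 V E T w" by auto
    qed
    then obtain r where r: "\<And>w. w \<in> N \<Longrightarrow> L < r w \<and> ereal (r w) < LP_fix0 V E T w" by metis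
    define r0 where "r0 = Min (insert (real (card N) / 2) (r ` N))"
    have r0le: "r0 \<le> real (card N) / 2" unfolding r0_def by (rule Min_le) (use finN in auto)
    have r0lew: "\<And>w. w \<in> N \<Longrightarrow> r0 \<le> r w" unfolding r0_def by (rule Min_le) (use finN in auto)
    have Lr0: "L < r0" unfolding r0_def using finN Llt r by auto
    have "LP V E T < ereal r0" using L Lr0 by simp
    then obtain d where dfe: "lp_feasible V E T d" and dc: "ereal (\<Sum>v\<in>V - T. d v) < ereal r0"
      unfolding LP_def INF_less_iff by blast
    have mw: "mwc V E T d" unfolding mwc_def using graph TV R1a dfe by blast
    obtain d' where d': "lp_feasible V E T d'" "(\<Sum>v\<in>V - T. d' v) \<le> (\<Sum>v\<in>V - T. d v)"
      "\<forall>v. d' v = 0 \<or> 1/2 \<le> d' v"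
      using mwc.round[OF mw s2] by blast
    have c': "(\<Sum>v\<in>V - T. d' v) < r0" using d'(2) dc by simp
    have "\<exists>w\<in>N. d' w = 0"
    proof (rule ccontr)
      assume "\<not> (\<exists>w\<in>N. d' w = 0)"
      then have hw: "\<And>w. w \<in> N \<Longrightarrow> 1/2 \<le> d' w" using d'(3) by metis
      have "(\<Sum>v\<in>N. (1/2::real)) \<le> (\<Sum>v\<in>N. d' v)" by (rule sum_mono) (rule hw)
      also have "\<dots> \<le> (\<Sum>v\<in>V - T. d' v)"
        by (rule sum_mono2) (use finV NV d'(1) in \<open>auto simp: lp_feasible_def\<close>)
      finally show False using c' r0le by simp
    qed
    then obtain w where w: "w \<in> N" "d' w = 0" by blast
    have "LP_fix0 V E T w \<le> ereal (\<Sum>v\<in>V - T. d' v)"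
      unfolding LP_fix0_def by (rule INF_lower) (use d'(1) w in simp)
    also have "\<dots> < ereal r0" using c' by simp
    also have "\<dots> \<le> ereal (r w)" using r0lew[OF w(1)] by simp
    also have "\<dots> < LP_fix0 V E T w" using r[OF w(1)] by simp
    finally have "LP_fix0 V E T w < LP_fix0 V E T w" .
    then show False by simp
  qed
  then show ?thesis using L N_def by blast
qed



theorem mainTheorem6:
  fixes V :: "'a set" and E :: "'a set set" and T :: "'a set" and k :: int
  assumes graph: "simple_graph V E"
    and TV: "T \<subseteq> V"
    and s2: "card T \<ge> 2"
    and R1a: "\<forall>t\<in>T. \<forall>t'\<in>T. \<not> adj E t t'"
    and R1b: "p_param V E T k \<ge> 0"
    and R2: "\<forall>v\<in>V - T. \<forall>t\<in>T. \<forall>t'\<in>T. t \<noteq> t' \<longrightarrow> \<not> (adj E v t \<and> adj E v t')"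
    and R3: "\<forall>t\<in>T. \<forall>w\<in>V - T. adj E t w \<longrightarrow> LP_fix0 V E T w > LP V E T"
    and cond: "real_of_int (q_param V E T k) \<ge> (real (card T) - 2) / (real (card T) - 1) * real_of_int k
               \<or> ereal (real_of_int (q_param V E T k)) \<le> 2 * p_param V E T k"
  shows "yes_instance V E T k"
proof -
  have finV: "finite V" using graph by (simp add: simple_graph_def)
  have finT: "finite T" using finV TV finite_subset by blast
  have Tne: "T \<noteq> {}" using s2 by auto
  define Nt where "Nt t = {w \<in> V - T. adj E t w}" for t
  define SC where "SC t = {S. separating_cut V E T t S}" for t
  have Nt_sep: "separating_cut V E T t (Nt t)" if t: "t \<in> T" for t
    unfolding separating_cut_def
  proof (intro conjI notI)
    show "Nt t \<subseteq> V - T" unfolding Nt_def by blast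
  next
    assume "\<exists>P. is_path V E P \<and> hd P = t \<and> last P \<in> T - {t} \<and> set P \<inter> Nt t = {}"
    then obtain P where P: "is_path V E P" "hd P = t" "last P \<in> T - {t}" "set P \<inter> Nt t = {}" by blast
    then have Pt: "P \<in> term_paths V E T" using t by (auto simp: term_paths_def)
    obtain w where "w \<in> set P" "w \<in> V - T" "adj E (hd P) w" using nbr[OF R1a Pt] by blast
    then show False using P unfolding Nt_def by blast
  qed
  have finSC: "finite (SC t)" for t
  proof (rule finite_subset)
    show "SC t \<subseteq> Pow (V - T)" unfolding SC_def separating_cut_def by blast
    show "finite (Pow (V - T))" using finV by simp
  qed
  have m_le: "m_param V E T t \<le> card (Nt t)" if "t \<in> T" for t
    unfolding m_param_def
    by (rule Min_le) (use finSC[of t] Nt_sep[OF that] in \<open>auto simp: SC_def\<close>)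
  have m_ex: "\<exists>S. separating_cut V E T t S \<and> card S = m_param V E T t" if "t \<in> T" for t
  proof -
    have "m_param V E T t \<in> card ` SC t"
      unfolding m_param_def SC_def[symmetric]
      by (rule Min_in) (use finSC[of t] Nt_sep[OF that] in \<open>auto simp: SC_def\<close>)
    then show ?thesis unfolding SC_def by auto
  qed
  define Mx where "Mx = Max (m_param V E T ` T)"
  have "Mx \<in> m_param V E T ` T" unfolding Mx_def by (rule Max_in) (use finT Tne in auto)
  then obtain ts where ts: "ts \<in> T" "m_param V E T ts = Mx" by auto
  have mMx: "m_param V E T t \<le> Mx" if "t \<in> T" for t
    unfolding Mx_def by (rule Max_ge) (use finT that in auto)
  have q: "q_param V E T k = k - int Mx" unfolding q_param_def Mx_def by simp
  from cond show ?thesis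
  proof
    assume c1: "real_of_int (q_param V E T k) \<ge> (real (card T) - 2) / (real (card T) - 1) * real_of_int k"
    have pos: "real (card T) - 1 > 0" using s2 by simp
    have "(real (card T) - 2) * real_of_int k \<le> real_of_int (q_param V E T k) * (real (card T) - 1)"
      using c1 pos by (simp add: field_simps)
    then have "(real (card T) - 2) * real_of_int k \<le> (real_of_int k - real Mx) * (real (card T) - 1)"
      using q by simp
    then have kb: "(real (card T) - 1) * real Mx \<le> real_of_int k" by (simp add: algebra_simps)
    obtain S where S: "\<And>t. t \<in> T \<Longrightarrow> separating_cut V E T t (S t) \<and> card (S t) = m_param V E T t"
      using m_ex by metis
    define X where "X = (\<Union>t\<in>T - {ts}. S t)"
    have XV: "X \<subseteq> V - T" unfolding X_def using S by (auto simp: separating_cut_def)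
    have "card X \<le> (\<Sum>t\<in>T - {ts}. card (S t))" unfolding X_def by (rule card_UN_le) (use finT in simp)
    also have "\<dots> \<le> (\<Sum>t\<in>T - {ts}. Mx)" by (rule sum_mono) (use S mMx in auto)
    also have "\<dots> = (card T - 1) * Mx" using ts finT by simp
    finally have "card X \<le> (card T - 1) * Mx" .
    then have "real (card X) \<le> real (card T - 1) * real Mx" by (metis of_nat_le_iff of_nat_mult)
    also have "real (card T - 1) = real (card T) - 1" using s2 by simp
    finally have "real (card X) \<le> real_of_int k" using kb by linarith
    then have ck: "int (card X) \<le> k" by linarith
    have hits: "set P \<inter> X \<noteq> {}" if P: "P \<in> term_paths V E T" for P
    proof -
      have ht: "hd P \<in> T" and lt: "last P \<in> T" and hl: "hd P \<noteq> last P" using P by (auto simp: term_paths_def)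
      show ?thesis
      proof (cases "hd P = ts")
        case False
        have "set P \<inter> S (hd P) \<noteq> {}" using sep_hits[of V E T "hd P" "S (hd P)" P] S[OF ht] P by blast
        moreover have "S (hd P) \<subseteq> X" unfolding X_def using False ht by blast
        ultimately show ?thesis by blast
      next
        case True
        then have lts: "last P \<noteq> ts" using hl by simp
        have Pr: "rev P \<in> term_paths V E T" by (rule term_paths_rev[OF P])
        have "set (rev P) \<inter> S (last P) \<noteq> {}"
          using sep_hits[of V E T "last P" "S (last P)" "rev P"] S[OF lt] Pr by (simp add: hd_rev)
        moreover have "S (last P) \<subseteq> X" unfolding X_def using lts lt by blast
        ultimately show ?thesis by auto
      qed
    qed
    show ?thesis unfolding yes_instance_def using XV ck hits by blast
  next
    assume c2: "ereal (real_of_int (q_param V E T k)) \<le> 2 * p_param V E T k"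
    obtain L where L: "LP V E T = ereal L" "real (card {w \<in> V - T. \<exists>t\<in>T. adj E t w}) / 2 \<le> L"
      using LP_half[OF graph TV s2 R1a R2 R3] by blast
    define N where "N = {w \<in> V - T. \<exists>t\<in>T. adj E t w}"
    have finN: "finite N" unfolding N_def using finV by simp
    have NtN: "Nt ts \<subseteq> N" unfolding Nt_def N_def using ts by blast
    have "real_of_int (q_param V E T k) \<le> 2 * (real_of_int k - L)"
      using c2 L(1) unfolding p_param_def by simp
    then have kb: "real (card N) - real Mx \<le> real_of_int k" using q L(2) N_def by simp
    define X where "X = N - Nt ts"
    have XV: "X \<subseteq> V - T" unfolding X_def N_def by blast
    have "card X = card N - card (Nt ts)" unfolding X_def by (rule card_Diff_subset) (use finN NtN finite_subset in auto)
    moreover have "card (Nt ts) \<le> card N" by (rule card_mono[OF finN NtN])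
    moreover have "Mx \<le> card (Nt ts)" using m_le[OF ts(1)] ts(2) by simp
    ultimately have "real (card X) \<le> real (card N) - real Mx" by simp
    then have ck: "int (card X) \<le> k" using kb by linarith
    have hit1: "set P \<inter> X \<noteq> {}" if P: "P \<in> term_paths V E T" and h: "hd P \<noteq> ts" for P
    proof -
      have ht: "hd P \<in> T" using P by (auto simp: term_paths_def)
      obtain w where w: "w \<in> set P" "w \<in> V - T" "adj E (hd P) w" using nbr[OF R1a P] by blast
      have "w \<in> N" using w ht unfolding N_def by blast
      moreover have "w \<notin> Nt ts"
      proof
        assume "w \<in> Nt ts"
        then have "adj E w ts \<and> adj E w (hd P)" using w unfolding Nt_def by (simp add: adj_sym)
        then show False using R2 w(2) ts(1) ht h by blast
      qed
      ultimately show ?thesis using w unfolding X_def by blast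
    qed
    have hits: "set P \<inter> X \<noteq> {}" if P: "P \<in> term_paths V E T" for P
    proof (cases "hd P = ts")
      case False then show ?thesis using hit1[OF P] by blast
    next
      case True
      have hl: "hd P \<noteq> last P" using P by (auto simp: term_paths_def)
      have "set (rev P) \<inter> X \<noteq> {}" using hit1[OF term_paths_rev[OF P]] True hl by (simp add: hd_rev)
      then show ?thesis by simp
    qed
    show ?thesis unfolding yes_instance_def using XV ck hits by blast
  qed
qed


end
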